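(* Let $n\ge 1$ and let $A = \begin{bmatrix} 0_n & I_n \\ 0_n & 0_n \end{bmatrix}$, $C = \begin{bmatrix} I_n & 0_n \end{bmatrix}$, $E = \begin{bmatrix} 0_n \\ I_n \end{bmatrix}$. Let $\kappa,\gamma>0$, and suppose $P\in\mathbb{R}^{2n\times 2n}$ is symmetric positive definite and $W\in\mathbb{R}^{2n\times n}$ is such that $$\begin{bmatrix} \Lambda & PE \\ E^\top P & -\gamma^2 I_n\end{bmatrix} < 0,\qquad \Lambda = P(\kappa I_{2n}+A) + (\kappa I_{2n}+A)^\top P + I_{2n} - WC - C^\top W^\top.$$ Partition $P = \begin{bmatrix} P_{11} & P_{12} \\ P_{12}^\top & P_{22}\end{bmatrix}$ with $P_{11},P_{12},P_{22}\in\mathbb{R}^{n\times n}$. Then $P_{11}>0$, $P_{22}>0$, and $P_{12}$ is non-singular and Hurwitz.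
   Context: $>0$ / $<0$ for symmetric matrices denote positive / negative definiteness. A square matrix is Hurwitz if all its eigenvalues have strictly negative real part. *)

theory Defs
  imports "Jordan_Normal_Form.Matrix" "Jordan_Normal_Form.Char_Poly"
begin

definition pos_def_mat :: "real mat \<Rightarrow> bool" where
  "pos_def_mat M \<longleftrightarrow> (\<exists>m. M \<in> carrier_mat m m) \<and> M = transpose_mat M \<and>
     (\<forall>x \<in> carrier_vec (dim_row M). x \<noteq> 0\<^sub>v (dim_row M) \<longrightarrow> x \<bullet> (M *\<^sub>v x) > 0)"

definition neg_def_mat :: "real mat \<Rightarrow> bool" where
  "neg_def_mat M \<longleftrightarrow> (\<exists>m. M \<in> carrier_mat m m) \<and> M = transpose_mat M \<and>
     (\<forall>x \<in> carrier_vec (dim_row M). x \<noteq> 0\<^sub>v (dim_row M) \<longrightarrow> x \<bullet> (M *\<^sub>v x) < 0)"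

definition hurwitz_mat :: "real mat \<Rightarrow> bool" where
  "hurwitz_mat M \<longleftrightarrow> (\<exists>m. M \<in> carrier_mat m m) \<and>
     (\<forall>k. eigenvalue (map_mat complex_of_real M) k \<longrightarrow> Re k < 0)"

definition A_mat :: "nat \<Rightarrow> real mat" where
  "A_mat n = four_block_mat (0\<^sub>m n n) (1\<^sub>m n) (0\<^sub>m n n) (0\<^sub>m n n)"

definition C_mat :: "nat \<Rightarrow> real mat" where
  "C_mat n = mat n (2*n) (\<lambda>(i,j). if j = i then 1 else 0)"

definition E_mat :: "nat \<Rightarrow> real mat" where
  "E_mat n = mat (2*n) n (\<lambda>(i,j). if i = j + n then 1 else 0)"

end

theory Submission
  imports Defs
begin

lemma C_mult_zero_app:
  assumes x: "x \<in> carrier_vec n"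
  shows "C_mat n *\<^sub>v (0\<^sub>v n @\<^sub>v x) = 0\<^sub>v n"
proof (rule eq_vecI)
  show "dim_vec (C_mat n *\<^sub>v (0\<^sub>v n @\<^sub>v x)) = dim_vec (0\<^sub>v n)" by (simp add: C_mat_def)
  fix i assume "i < dim_vec (0\<^sub>v n :: real vec)"
  hence i: "i < n" by simp
  have "(C_mat n *\<^sub>v (0\<^sub>v n @\<^sub>v x)) $ i = 0"
    using i x by (auto simp add: C_mat_def mult_mat_vec_def scalar_prod_def row_def intro!: sum.neutral)
  thus "(C_mat n *\<^sub>v (0\<^sub>v n @\<^sub>v x)) $ i = 0\<^sub>v n $ i" using i by simp
qed

lemma mult_zero_vec_right[simp]:
  "A \<in> carrier_mat nr n \<Longrightarrow> A *\<^sub>v 0\<^sub>v n = (0\<^sub>v nr :: 'a :: comm_ring_1 vec)"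
  by (intro eq_vecI) auto

lemma smult_one_mult_vec[simp]:
  "(v :: 'a :: comm_ring_1 vec) \<in> carrier_vec n \<Longrightarrow> (k \<cdot>\<^sub>m 1\<^sub>m n) *\<^sub>v v = k \<cdot>\<^sub>v v"
proof (intro eq_vecI)
  fix i assume v: "v \<in> carrier_vec n" and i: "i < dim_vec (k \<cdot>\<^sub>v v)"
  have "((k \<cdot>\<^sub>m 1\<^sub>m n) *\<^sub>v v) $ i = (\<Sum>j\<in>{0..<n}. k * (if i = j then 1 else 0) * v $ j)"
    using v i by (auto simp: scalar_prod_def mult_mat_vec_def row_def)
  also have "\<dots> = k * v $ i" using i v by (subst sum.remove[of _ i]) auto
  finally show "((k \<cdot>\<^sub>m 1\<^sub>m n) *\<^sub>v v) $ i = (k \<cdot>\<^sub>v v) $ i" using i v by simp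
qed (auto)

lemma A_mult_app:
  assumes x: "x \<in> carrier_vec n"
  shows "A_mat n *\<^sub>v (0\<^sub>v n @\<^sub>v x) = x @\<^sub>v 0\<^sub>v n"
  unfolding A_mat_def using x
  by (subst four_block_mat_mult_vec[of _ n n _ n _ n]) auto

theorem corollary1:
  fixes n :: nat and \<kappa> \<gamma> :: real
    and P W P11 P12 P22 :: "real mat"
  assumes "n \<ge> 1"
    and "\<kappa> > 0" and "\<gamma> > 0"
    and "P \<in> carrier_mat (2*n) (2*n)" and "pos_def_mat P"
    and "W \<in> carrier_mat (2*n) n"
    and "neg_def_mat (four_block_mat
           (P * (\<kappa> \<cdot>\<^sub>m 1\<^sub>m (2*n) + A_mat n) + transpose_mat (\<kappa> \<cdot>\<^sub>m 1\<^sub>m (2*n) + A_mat n) * P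
              + 1\<^sub>m (2*n) - W * C_mat n - transpose_mat (C_mat n) * transpose_mat W)
           (P * E_mat n)
           (transpose_mat (E_mat n) * P)
           (- (\<gamma>^2 \<cdot>\<^sub>m 1\<^sub>m n)))"
    and "P11 \<in> carrier_mat n n" and "P12 \<in> carrier_mat n n" and "P22 \<in> carrier_mat n n"
    and "P = four_block_mat P11 P12 (transpose_mat P12) P22"
  shows "pos_def_mat P11 \<and> pos_def_mat P22 \<and> det P12 \<noteq> 0 \<and> hurwitz_mat P12"
proof -
  note Pd = assms(11)
  have nn: "2*n = n+n" by simp
  have P: "P \<in> carrier_mat (n+n) (n+n)" using assms(4) by (simp add: nn)
  have W: "W \<in> carrier_mat (n+n) n" using assms(6) by (simp add: nn)
  have P11: "P11 \<in> carrier_mat n n" and P12: "P12 \<in> carrier_mat n n" and P22: "P22 \<in> carrier_mat n n"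
    using assms(8-10) by auto
  have Pv1: "P *\<^sub>v (x @\<^sub>v 0\<^sub>v n) = (P11 *\<^sub>v x) @\<^sub>v (transpose_mat P12 *\<^sub>v x)"
    if x: "x \<in> carrier_vec n" for x
    unfolding Pd using x P11 P12 P22
    by (subst four_block_mat_mult_vec[of _ n n _ n _ n]) auto
  have Pv2: "P *\<^sub>v (0\<^sub>v n @\<^sub>v x) = (P12 *\<^sub>v x) @\<^sub>v (P22 *\<^sub>v x)"
    if x: "x \<in> carrier_vec n" for x
    unfolding Pd using x P11 P12 P22
    by (subst four_block_mat_mult_vec[of _ n n _ n _ n]) auto
  have qP: "\<forall>y \<in> carrier_vec (n+n). y \<noteq> 0\<^sub>v (n+n) \<longrightarrow> y \<bullet> (P *\<^sub>v y) > 0"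
    using assms(5) P unfolding pos_def_mat_def by auto
  have z: "0\<^sub>v (n+n) = (0\<^sub>v n @\<^sub>v 0\<^sub>v n :: real vec)" by (intro eq_vecI) auto
  have q11: "x \<bullet> (P11 *\<^sub>v x) > 0" if x: "x \<in> carrier_vec n" "x \<noteq> 0\<^sub>v n" for x
  proof -
    have "x @\<^sub>v 0\<^sub>v n \<noteq> 0\<^sub>v (n+n)"
      using x by (subst z) (simp add: append_vec_eq[of x n])
    then have "(x @\<^sub>v 0\<^sub>v n) \<bullet> (P *\<^sub>v (x @\<^sub>v 0\<^sub>v n)) > 0" using qP x by auto
    then show ?thesis using x P12 P11 by (simp add: Pv1 scalar_prod_append[of _ n _ n])
  qed
  have q22: "x \<bullet> (P22 *\<^sub>v x) > 0" if x: "x \<in> carrier_vec n" "x \<noteq> 0\<^sub>v n" for x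
  proof -
    have "0\<^sub>v n @\<^sub>v x \<noteq> 0\<^sub>v (n+n)"
      using x by (subst z) (simp add: append_vec_eq[of "0\<^sub>v n" n])
    then have "(0\<^sub>v n @\<^sub>v x) \<bullet> (P *\<^sub>v (0\<^sub>v n @\<^sub>v x)) > 0" using qP x by auto
    then show ?thesis using x P12 P22 by (simp add: Pv2 scalar_prod_append[of _ n _ n])
  qed
  define K where "K = \<kappa> \<cdot>\<^sub>m 1\<^sub>m (n+n) + A_mat n"
  define L where "L = P * K + transpose_mat K * P + 1\<^sub>m (n+n) - W * C_mat n - transpose_mat (C_mat n) * transpose_mat W"
  have neg: "neg_def_mat (four_block_mat L (P * E_mat n) (transpose_mat (E_mat n) * P) (- (\<gamma>^2 \<cdot>\<^sub>m 1\<^sub>m n)))"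
    using assms(7) unfolding K_def L_def nn .
  have A: "A_mat n \<in> carrier_mat (n+n) (n+n)" unfolding A_mat_def by auto
  have C: "C_mat n \<in> carrier_mat n (n+n)" unfolding C_mat_def by (simp add: nn)
  have E: "E_mat n \<in> carrier_mat (n+n) n" unfolding E_mat_def by (simp add: nn)
  have K: "K \<in> carrier_mat (n+n) (n+n)" unfolding K_def using A by auto
  have L: "L \<in> carrier_mat (n+n) (n+n)" unfolding L_def using K P W C by auto
  have q12: "x \<bullet> (P12 *\<^sub>v x) < 0" if x: "x \<in> carrier_vec n" "x \<noteq> 0\<^sub>v n" for x
  proof -
    define y where "y = 0\<^sub>v n @\<^sub>v x"
    define u where "u = x @\<^sub>v 0\<^sub>v n"
    have y: "y \<in> carrier_vec (n+n)" and u: "u \<in> carrier_vec (n+n)" unfolding y_def u_def using x by auto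
    have yne: "y \<noteq> 0\<^sub>v (n+n)" unfolding y_def
      using x by (subst z) (simp add: append_vec_eq[of "0\<^sub>v n" n])
    have Ky: "K *\<^sub>v y = \<kappa> \<cdot>\<^sub>v y + u"
      unfolding K_def using y A x
      by (simp add: add_mult_distrib_mat_vec[of _ "n+n" "n+n"] y_def u_def A_mult_app)
    have Cy: "C_mat n *\<^sub>v y = 0\<^sub>v n" unfolding y_def using C_mult_zero_app[OF x(1)] .
    have Py: "P *\<^sub>v y \<in> carrier_vec (n+n)" using P y by auto
    have t1: "y \<bullet> ((P * K) *\<^sub>v y) = \<kappa> * (y \<bullet> (P *\<^sub>v y)) + y \<bullet> (P *\<^sub>v u)"
      using P K y u Ky
      by (simp add: mult_add_distrib_mat_vec[of P "n+n" "n+n"] mult_mat_vec[of P "n+n" "n+n"]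
          scalar_prod_add_distrib[of y "n+n"])
    have t2: "y \<bullet> ((transpose_mat K * P) *\<^sub>v y) = \<kappa> * (y \<bullet> (P *\<^sub>v y)) + u \<bullet> (P *\<^sub>v y)"
    proof -
      have "y \<bullet> ((transpose_mat K * P) *\<^sub>v y) = (transpose_mat K *\<^sub>v (P *\<^sub>v y)) \<bullet> y"
        using K P y by (simp add: comm_scalar_prod[of y "n+n"])
      also have "\<dots> = (P *\<^sub>v y) \<bullet> (K *\<^sub>v y)"
        using transpose_vec_mult_scalar[OF K y Py] .
      also have "\<dots> = \<kappa> * ((P *\<^sub>v y) \<bullet> y) + (P *\<^sub>v y) \<bullet> u"
        using Ky Py y u by (simp add: scalar_prod_add_distrib[of _ "n+n"])
      also have "\<dots> = \<kappa> * (y \<bullet> (P *\<^sub>v y)) + u \<bullet> (P *\<^sub>v y)"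
        using Py y u by (simp add: comm_scalar_prod[of _ "n+n"])
      finally show ?thesis .
    qed
    have t4: "y \<bullet> ((W * C_mat n) *\<^sub>v y) = 0"
      using W C y Cy by simp
    have t5: "y \<bullet> ((transpose_mat (C_mat n) * transpose_mat W) *\<^sub>v y) = 0"
    proof -
      have Wy: "transpose_mat W *\<^sub>v y \<in> carrier_vec n" using W y by auto
      have "y \<bullet> ((transpose_mat (C_mat n) * transpose_mat W) *\<^sub>v y)
          = (transpose_mat (C_mat n) *\<^sub>v (transpose_mat W *\<^sub>v y)) \<bullet> y"
        using C W y by (simp add: comm_scalar_prod[of y "n+n"])
      also have "\<dots> = (transpose_mat W *\<^sub>v y) \<bullet> (C_mat n *\<^sub>v y)"
        using transpose_vec_mult_scalar[OF C y Wy] .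
      finally show ?thesis using Cy Wy by simp
    qed
    have Ly: "y \<bullet> (L *\<^sub>v y) = y \<bullet> ((P * K) *\<^sub>v y) + y \<bullet> ((transpose_mat K * P) *\<^sub>v y) + y \<bullet> y
        - y \<bullet> ((W * C_mat n) *\<^sub>v y) - y \<bullet> ((transpose_mat (C_mat n) * transpose_mat W) *\<^sub>v y)"
    proof -
      define M1 where "M1 = P * K"
      define M2 where "M2 = transpose_mat K * P"
      define M4 where "M4 = W * C_mat n"
      define M5 where "M5 = transpose_mat (C_mat n) * transpose_mat W"
      have c: "M1 \<in> carrier_mat (n+n) (n+n)" "M2 \<in> carrier_mat (n+n) (n+n)"
        "M4 \<in> carrier_mat (n+n) (n+n)" "M5 \<in> carrier_mat (n+n) (n+n)"
        unfolding M1_def M2_def M4_def M5_def using P K W C by auto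
      have "L *\<^sub>v y = M1 *\<^sub>v y + M2 *\<^sub>v y + y - M4 *\<^sub>v y - M5 *\<^sub>v y"
      proof -
        have o: "1\<^sub>m (n+n) \<in> carrier_mat (n+n) (n+n)" by simp
        have a1: "M1 + M2 \<in> carrier_mat (n+n) (n+n)" "M1 + M2 + 1\<^sub>m (n+n) \<in> carrier_mat (n+n) (n+n)"
          "M1 + M2 + 1\<^sub>m (n+n) - M4 \<in> carrier_mat (n+n) (n+n)" using c by auto
        have "(M1 + M2 + 1\<^sub>m (n+n) - M4 - M5) *\<^sub>v y = (M1 + M2 + 1\<^sub>m (n+n) - M4) *\<^sub>v y - M5 *\<^sub>v y"
          by (rule minus_mult_distrib_mat_vec[OF a1(3) c(4) y])
        also have "(M1 + M2 + 1\<^sub>m (n+n) - M4) *\<^sub>v y = (M1 + M2 + 1\<^sub>m (n+n)) *\<^sub>v y - M4 *\<^sub>v y"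
          by (rule minus_mult_distrib_mat_vec[OF a1(2) c(3) y])
        also have "(M1 + M2 + 1\<^sub>m (n+n)) *\<^sub>v y = (M1 + M2) *\<^sub>v y + 1\<^sub>m (n+n) *\<^sub>v y"
          by (rule add_mult_distrib_mat_vec[OF a1(1) o y])
        also have "(M1 + M2) *\<^sub>v y = M1 *\<^sub>v y + M2 *\<^sub>v y"
          by (rule add_mult_distrib_mat_vec[OF c(1) c(2) y])
        finally have "(M1 + M2 + 1\<^sub>m (n+n) - M4 - M5) *\<^sub>v y = M1 *\<^sub>v y + M2 *\<^sub>v y + y - M4 *\<^sub>v y - M5 *\<^sub>v y"
          using y by simp
        moreover have "L = M1 + M2 + 1\<^sub>m (n+n) - M4 - M5" unfolding L_def M1_def M2_def M4_def M5_def ..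
        ultimately show ?thesis by simp
      qed
      then show ?thesis
        unfolding M1_def[symmetric] M2_def[symmetric] M4_def[symmetric] M5_def[symmetric]
        using c y
        by (simp add: scalar_prod_minus_distrib[of _ "n+n"] scalar_prod_add_distrib[of _ "n+n"])
    qed
    have yLy: "y \<bullet> (L *\<^sub>v y) = 2 * \<kappa> * (x \<bullet> (P22 *\<^sub>v x)) + 2 * (x \<bullet> (P12 *\<^sub>v x)) + x \<bullet> x"
    proof -
      have e1: "y \<bullet> (P *\<^sub>v y) = x \<bullet> (P22 *\<^sub>v x)"
        unfolding y_def using x P12 P22 by (simp add: Pv2 scalar_prod_append[of _ n _ n])
      have e2: "u \<bullet> (P *\<^sub>v y) = x \<bullet> (P12 *\<^sub>v x)"
        unfolding y_def u_def using x P12 P22 by (simp add: Pv2 scalar_prod_append[of _ n _ n])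
      have "y \<bullet> (P *\<^sub>v u) = x \<bullet> (transpose_mat P12 *\<^sub>v x)"
        unfolding y_def u_def using x P12 P11 by (simp add: Pv1 scalar_prod_append[of _ n _ n])
      also have "\<dots> = (transpose_mat P12 *\<^sub>v x) \<bullet> x"
        using x P12 by (simp add: comm_scalar_prod[of x n])
      also have "\<dots> = x \<bullet> (P12 *\<^sub>v x)" using transpose_vec_mult_scalar[OF P12 x(1) x(1)] .
      finally have e3: "y \<bullet> (P *\<^sub>v u) = x \<bullet> (P12 *\<^sub>v x)" .
      have e4: "y \<bullet> y = x \<bullet> x" unfolding y_def using x by (simp add: scalar_prod_append[of _ n _ n])
      show ?thesis unfolding Ly t1 t2 t4 t5 e1 e2 e3 e4 by simp
    qed
    have Z: "y @\<^sub>v 0\<^sub>v n \<in> carrier_vec (n+n+n)" using y by auto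
    have Zne: "y @\<^sub>v 0\<^sub>v n \<noteq> 0\<^sub>v (n+n+n)"
    proof
      assume "y @\<^sub>v 0\<^sub>v n = 0\<^sub>v (n+n+n)"
      also have "0\<^sub>v (n+n+n) = (0\<^sub>v (n+n) @\<^sub>v 0\<^sub>v n :: real vec)" by (intro eq_vecI) auto
      finally show False using y yne by (simp add: append_vec_eq[of y "n+n"])
    qed
    let ?M = "four_block_mat L (P * E_mat n) (transpose_mat (E_mat n) * P) (- (\<gamma>^2 \<cdot>\<^sub>m 1\<^sub>m n))"
    have dM: "dim_row ?M = n+n+n" using L by simp
    have "(y @\<^sub>v 0\<^sub>v n) \<bullet> (?M *\<^sub>v (y @\<^sub>v 0\<^sub>v n)) < 0"
      using neg Z Zne unfolding neg_def_mat_def dM by blast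
    also have "(y @\<^sub>v 0\<^sub>v n) \<bullet> (?M *\<^sub>v (y @\<^sub>v 0\<^sub>v n)) = y \<bullet> (L *\<^sub>v y)"
      using L P E y
      by (simp add: four_block_mat_mult_vec[of L "n+n" "n+n" _ n _ n] scalar_prod_append[of _ "n+n" _ n])
    finally have "2 * \<kappa> * (x \<bullet> (P22 *\<^sub>v x)) + 2 * (x \<bullet> (P12 *\<^sub>v x)) + x \<bullet> x < 0"
      using yLy by simp
    moreover have "x \<bullet> x \<ge> 0" by (simp add: scalar_prod_def sum_nonneg)
    moreover have "x \<bullet> (P22 *\<^sub>v x) > 0" using q22 x by blast
    ultimately show ?thesis using assms(2) by (smt (verit) mult_pos_pos)
  qed
  have Psym: "P $$ (i,j) = P $$ (j,i)" if "i < n+n" "j < n+n" for i j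
  proof -
    have "P = transpose_mat P" using assms(5) unfolding pos_def_mat_def by blast
    hence "P $$ (i,j) = transpose_mat P $$ (i,j)" by simp
    also have "\<dots> = P $$ (j,i)" using that P by simp
    finally show ?thesis .
  qed
  have sym11: "P11 = transpose_mat P11"
  proof (rule eq_matI)
    fix i j assume "i < dim_row (transpose_mat P11)" "j < dim_col (transpose_mat P11)"
    hence ij: "i < n" "j < n" using P11 by auto
    have "P11 $$ (i,j) = P $$ (i,j)" unfolding Pd using ij P11 P12 P22 by simp
    also have "\<dots> = P $$ (j,i)" using Psym ij by simp
    also have "\<dots> = P11 $$ (j,i)" unfolding Pd using ij P11 P12 P22 by simp
    finally show "P11 $$ (i,j) = transpose_mat P11 $$ (i,j)" using ij P11 by simp
  qed (use P11 in auto)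
  have sym22: "P22 = transpose_mat P22"
  proof (rule eq_matI)
    fix i j assume "i < dim_row (transpose_mat P22)" "j < dim_col (transpose_mat P22)"
    hence ij: "i < n" "j < n" using P22 by auto
    have "P22 $$ (i,j) = P $$ (n+i,n+j)" unfolding Pd using ij P11 P12 P22 by simp
    also have "\<dots> = P $$ (n+j,n+i)" using Psym ij by simp
    also have "\<dots> = P22 $$ (j,i)" unfolding Pd using ij P11 P12 P22 by simp
    finally show "P22 $$ (i,j) = transpose_mat P22 $$ (i,j)" using ij P22 by simp
  qed (use P22 in auto)
  have pd11: "pos_def_mat P11" unfolding pos_def_mat_def using P11 sym11 q11 by auto
  have pd22: "pos_def_mat P22" unfolding pos_def_mat_def using P22 sym22 q22 by auto
  have det: "det P12 \<noteq> 0"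
  proof
    assume "det P12 = 0"
    then obtain v where v: "v \<in> carrier_vec n" "v \<noteq> 0\<^sub>v n" "P12 *\<^sub>v v = 0\<^sub>v n"
      using det_0_iff_vec_prod_zero[OF P12] by blast
    have "v \<bullet> (P12 *\<^sub>v v) < 0" using q12 v by blast
    thus False using v by simp
  qed
  have q12': "x \<bullet> (P12 *\<^sub>v x) \<le> 0" if x: "x \<in> carrier_vec n" for x
    using q12[OF x] x P12 by (cases "x = 0\<^sub>v n") force+
  have hw: "hurwitz_mat P12"
    unfolding hurwitz_mat_def
  proof (intro conjI allI impI)
    show "\<exists>m. P12 \<in> carrier_mat m m" using P12 by blast
    fix k assume "eigenvalue (map_mat complex_of_real P12) k"
    then obtain v where v: "v \<in> carrier_vec n" "v \<noteq> 0\<^sub>v n"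
      "map_mat complex_of_real P12 *\<^sub>v v = k \<cdot>\<^sub>v v"
      unfolding eigenvalue_def eigenvector_def using P12 by auto
    define a where "a = vec n (\<lambda>i. Re (v $ i))"
    define b where "b = vec n (\<lambda>i. Im (v $ i))"
    have a: "a \<in> carrier_vec n" and b: "b \<in> carrier_vec n" unfolding a_def b_def by auto
    have comp: "(\<Sum>j<n. complex_of_real (P12 $$ (i,j)) * v $ j) = k * v $ i" if i: "i < n" for i
    proof -
      have "(map_mat complex_of_real P12 *\<^sub>v v) $ i = (k \<cdot>\<^sub>v v) $ i" using v by simp
      thus ?thesis using i v P12
        by (simp add: mult_mat_vec_def scalar_prod_def row_def lessThan_atLeast0)
    qed
    have Pa: "P12 *\<^sub>v a = Re k \<cdot>\<^sub>v a - Im k \<cdot>\<^sub>v b"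
    proof (rule eq_vecI)
      fix i assume "i < dim_vec (Re k \<cdot>\<^sub>v a - Im k \<cdot>\<^sub>v b)"
      hence i: "i < n" using b by simp
      have "(P12 *\<^sub>v a) $ i = (\<Sum>j<n. P12 $$ (i,j) * Re (v $ j))"
        using i P12 unfolding a_def by (simp add: mult_mat_vec_def scalar_prod_def row_def lessThan_atLeast0)
      also have "\<dots> = Re (\<Sum>j<n. complex_of_real (P12 $$ (i,j)) * v $ j)" by (simp add: Re_sum)
      also have "\<dots> = Re (k * v $ i)" using comp[OF i] by simp
      also have "\<dots> = (Re k \<cdot>\<^sub>v a - Im k \<cdot>\<^sub>v b) $ i" using i a b unfolding a_def b_def by simp
      finally show "(P12 *\<^sub>v a) $ i = (Re k \<cdot>\<^sub>v a - Im k \<cdot>\<^sub>v b) $ i" .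
    qed (use a b P12 in simp)
    have Pb: "P12 *\<^sub>v b = Re k \<cdot>\<^sub>v b + Im k \<cdot>\<^sub>v a"
    proof (rule eq_vecI)
      fix i assume "i < dim_vec (Re k \<cdot>\<^sub>v b + Im k \<cdot>\<^sub>v a)"
      hence i: "i < n" using a by simp
      have "(P12 *\<^sub>v b) $ i = (\<Sum>j<n. P12 $$ (i,j) * Im (v $ j))"
        using i P12 unfolding b_def by (simp add: mult_mat_vec_def scalar_prod_def row_def lessThan_atLeast0)
      also have "\<dots> = Im (\<Sum>j<n. complex_of_real (P12 $$ (i,j)) * v $ j)" by (simp add: Im_sum)
      also have "\<dots> = Im (k * v $ i)" using comp[OF i] by simp
      also have "\<dots> = (Re k \<cdot>\<^sub>v b + Im k \<cdot>\<^sub>v a) $ i" using i a b unfolding a_def b_def by (simp add: algebra_simps)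
      finally show "(P12 *\<^sub>v b) $ i = (Re k \<cdot>\<^sub>v b + Im k \<cdot>\<^sub>v a) $ i" .
    qed (use a b P12 in simp)
    have ab: "a \<noteq> 0\<^sub>v n \<or> b \<noteq> 0\<^sub>v n"
    proof (rule ccontr)
      assume "\<not> ?thesis"
      hence "a = 0\<^sub>v n" "b = 0\<^sub>v n" by auto
      hence "v = 0\<^sub>v n"
      proof (intro eq_vecI)
        fix i assume "i < dim_vec (0\<^sub>v n :: complex vec)"
        hence i: "i < n" by simp
        have "Re (v $ i) = 0" "Im (v $ i) = 0"
          using arg_cong[OF \<open>a = 0\<^sub>v n\<close>, of "\<lambda>w. w $ i"] arg_cong[OF \<open>b = 0\<^sub>v n\<close>, of "\<lambda>w. w $ i"] i
          unfolding a_def b_def by auto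
        thus "v $ i = 0\<^sub>v n $ i" using i by (simp add: complex_eq_iff)
      qed (use v in simp)
      thus False using v by simp
    qed
    have neg: "a \<bullet> (P12 *\<^sub>v a) + b \<bullet> (P12 *\<^sub>v b) < 0"
      using ab q12 q12' a b by (meson add_neg_nonpos add_nonpos_neg)
    have "a \<bullet> (P12 *\<^sub>v a) + b \<bullet> (P12 *\<^sub>v b) = Re k * (a \<bullet> a + b \<bullet> b)"
      unfolding Pa Pb using a b
      by (simp add: scalar_prod_minus_distrib[of _ n] scalar_prod_add_distrib[of _ n]
          comm_scalar_prod[of a n b] algebra_simps)
    moreover have "a \<bullet> a \<ge> 0" "b \<bullet> b \<ge> 0" by (simp_all add: scalar_prod_def sum_nonneg)
    ultimately show "Re k < 0" using neg
      by (smt (verit) mult_nonneg_nonneg)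
  qed
  show ?thesis using pd11 pd22 det hw by blast
qed

end
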